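(* For every finite configuration $F\subseteq\mathbb{R}^d$ there is a real $\varepsilon>0$ such that for all functions $\rho,\sigma\colon F\to F$ the following holds: if there is a real $q$ with $$\Big|\,q\|f'-f''\|^2-\big(\rho(f')-\rho(f'')\big)\cdot\big(\sigma(f')-\sigma(f'')\big)\Big|\leq\varepsilon\quad\text{for all } f',f''\in F,$$ then there is a real $\overline{q}$ with $$\overline{q}\|f'-f''\|^2=\big(\rho(f')-\rho(f'')\big)\cdot\big(\sigma(f')-\sigma(f'')\big)\quad\text{for all } f',f''\in F.$$
   Context: $\|\cdot\|$ is the Euclidean norm on $\mathbb{R}^d$ and $x\cdot y$ is the standard scalar product. *)

theory Defs
  imports "HOL-Analysis.Analysis"
begin

end

theory Submission
  imports Defs
begin

lemma key_ineq:
  fixes q n1 n2 d1 d2 e :: real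
  assumes "\<bar>q * n1 - d1\<bar> \<le> e" "\<bar>q * n2 - d2\<bar> \<le> e" "n1 \<ge> 0" "n2 \<ge> 0"
  shows "\<bar>d1 * n2 - d2 * n1\<bar> \<le> e * (n1 + n2)"
proof -
  have eq: "d1 * n2 - d2 * n1 = (q * n2 - d2) * n1 - (q * n1 - d1) * n2" by algebra
  have "\<bar>(q * n2 - d2) * n1\<bar> \<le> e * n1"
    using assms by (simp add: abs_mult mult_right_mono)
  moreover have "\<bar>(q * n1 - d1) * n2\<bar> \<le> e * n2"
    using assms by (simp add: abs_mult mult_right_mono)
  ultimately show ?thesis unfolding eq by (simp add: distrib_left abs_triangle_ineq4 order_trans[OF abs_triangle_ineq4])
qed

theorem lemma2p1:
  fixes F :: "'a::euclidean_space set"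
  assumes "finite F"
  shows "\<exists>\<epsilon>>0. \<forall>\<rho> \<sigma>. (\<forall>f\<in>F. \<rho> f \<in> F) \<longrightarrow> (\<forall>f\<in>F. \<sigma> f \<in> F) \<longrightarrow>
           (\<exists>q::real. \<forall>f'\<in>F. \<forall>f''\<in>F.
              \<bar>q * (norm (f' - f''))\<^sup>2 - (\<rho> f' - \<rho> f'') \<bullet> (\<sigma> f' - \<sigma> f'')\<bar> \<le> \<epsilon>) \<longrightarrow>
           (\<exists>qbar::real. \<forall>f'\<in>F. \<forall>f''\<in>F.
              qbar * (norm (f' - f''))\<^sup>2 = (\<rho> f' - \<rho> f'') \<bullet> (\<sigma> f' - \<sigma> f''))"
proof -
  define N where "N = (\<lambda>(a,b). (norm (a - b))\<^sup>2) ` (F \<times> F)"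
  define V where "V = (\<lambda>(x,y,z,w). (x - y) \<bullet> (z - w)) ` (F \<times> F \<times> F \<times> F)"
  define T where "T = ((\<lambda>(d1,d2,n1,n2). \<bar>d1 * n2 - d2 * n1\<bar>) ` (V \<times> V \<times> N \<times> N)) - {0}"
  define m where "m = Min (insert 1 T)"
  define B where "B = Max (insert 0 N)"
  define e where "e = m / (2 * B + 1)"
  have finN: "finite N" unfolding N_def using assms by simp
  have finV: "finite V" unfolding V_def using assms by simp
  have finT: "finite T" unfolding T_def using finN finV by simp
  have Tpos: "\<And>t. t \<in> T \<Longrightarrow> t > 0" unfolding T_def by auto
  have mpos: "m > 0" unfolding m_def using finT Tpos
    by (subst Min_gr_iff) auto
  have mle: "\<And>t. t \<in> T \<Longrightarrow> m \<le> t" unfolding m_def using finT by simp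
  have B0: "B \<ge> 0" unfolding B_def using finN by simp
  have NB: "\<And>n. n \<in> N \<Longrightarrow> n \<le> B" unfolding B_def using finN by simp
  have epos: "e > 0" unfolding e_def using mpos B0 by simp
  show ?thesis
  proof (rule exI[of _ e], intro conjI epos allI impI)
    fix \<rho> \<sigma> :: "'a \<Rightarrow> 'a"
    assume r: "\<forall>f\<in>F. \<rho> f \<in> F" and s: "\<forall>f\<in>F. \<sigma> f \<in> F"
    assume "\<exists>q::real. \<forall>f'\<in>F. \<forall>f''\<in>F.
              \<bar>q * (norm (f' - f''))\<^sup>2 - (\<rho> f' - \<rho> f'') \<bullet> (\<sigma> f' - \<sigma> f'')\<bar> \<le> e"
    then obtain q where q: "\<And>f' f''. f' \<in> F \<Longrightarrow> f'' \<in> F \<Longrightarrow>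
              \<bar>q * (norm (f' - f''))\<^sup>2 - (\<rho> f' - \<rho> f'') \<bullet> (\<sigma> f' - \<sigma> f'')\<bar> \<le> e" by blast
    define D where "D = (\<lambda>f' f''. (\<rho> f' - \<rho> f'') \<bullet> (\<sigma> f' - \<sigma> f''))"
    define n where "n = (\<lambda>f' f'':: 'a. (norm (f' - f''))\<^sup>2)"
    have DV: "D a b \<in> V" if ab: "a \<in> F" "b \<in> F" for a b
      unfolding D_def V_def
      by (rule image_eqI[where x="(\<rho> a, \<rho> b, \<sigma> a, \<sigma> b)"]) (use r s ab in auto)
    have nN: "n a b \<in> N" if ab: "a \<in> F" "b \<in> F" for a b
      unfolding n_def N_def
      by (rule image_eqI[where x="(a, b)"]) (use ab in auto)
    have cross: "D a b * n c d = D c d * n a b"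
      if F: "a \<in> F" "b \<in> F" "c \<in> F" "d \<in> F" for a b c d
    proof (rule ccontr)
      assume ne: "D a b * n c d \<noteq> D c d * n a b"
      have inT: "\<bar>D a b * n c d - D c d * n a b\<bar> \<in> T"
        unfolding T_def using ne DV[OF F(1,2)] DV[OF F(3,4)] nN[OF F(1,2)] nN[OF F(3,4)]
        by (auto intro!: image_eqI[where x="(D a b, D c d, n a b, n c d)"])
      have "\<bar>D a b * n c d - D c d * n a b\<bar> \<le> e * (n a b + n c d)"
        apply (rule key_ineq[where q=q])
        using q[OF F(1,2)] q[OF F(3,4)] unfolding D_def n_def by auto
      also have "\<dots> \<le> e * (2 * B)"
        using NB[OF nN[OF F(1,2)]] NB[OF nN[OF F(3,4)]] epos by simp
      also have "\<dots> < m"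
      proof -
        have "e * (2 * B) = m * (2 * B) / (2 * B + 1)" unfolding e_def by simp
        also have "\<dots> < m" using mpos B0 by (simp add: divide_less_eq)
        finally show ?thesis .
      qed
      finally show False using mle[OF inT] by simp
    qed
    show "\<exists>qbar::real. \<forall>f'\<in>F. \<forall>f''\<in>F.
              qbar * (norm (f' - f''))\<^sup>2 = (\<rho> f' - \<rho> f'') \<bullet> (\<sigma> f' - \<sigma> f'')"
    proof (cases "\<exists>a\<in>F. \<exists>b\<in>F. a \<noteq> b")
      case True
      then obtain a b where ab: "a \<in> F" "b \<in> F" "a \<noteq> b" by blast
      have npos: "n a b \<noteq> 0" unfolding n_def using ab by simp
      show ?thesis
      proof (intro exI[of _ "D a b / n a b"] ballI)
        fix f' f'' assume f: "f' \<in> F" "f'' \<in> F"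
        have "D a b * n f' f'' = D f' f'' * n a b" using cross[OF ab(1,2) f] .
        then have "D a b / n a b * n f' f'' = D f' f''" using npos
          by (simp add: field_simps)
        then show "D a b / n a b * (norm (f' - f''))\<^sup>2 = (\<rho> f' - \<rho> f'') \<bullet> (\<sigma> f' - \<sigma> f'')"
          unfolding D_def n_def by simp
      qed
    next
      case False
      show ?thesis
      proof (intro exI[of _ 0] ballI)
        fix f' f'' assume f: "f' \<in> F" "f'' \<in> F"
        then have "f' = f''" using False by blast
        then show "0 * (norm (f' - f''))\<^sup>2 = (\<rho> f' - \<rho> f'') \<bullet> (\<sigma> f' - \<sigma> f'')" by simp
      qed
    qed
  qed
qed

end
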